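(* Let $G$ be a graph and let $A$ and $B$ be two disjoint sets of vertices of $G$ with $|A|=|B|=t$, such that the vertices of $A$ are pairwise adjacent, the vertices of $B$ are pairwise adjacent, and for any two distinct vertices $w,z$ both in $A$ or both in $B$ we have $d(w,y)=d(z,y)$ for all $y\in V(G)\setminus\{w,z\}$. Then $rvcl(G)\geq t+1$.
   Context: All graphs are finite, simple, connected and undirected; $d$ denotes graph distance. For a graph $G$ and $k\in\mathbb{N}$, a rainbow vertex $k$-coloring of $G$ is a map $c:V(G)\to\{1,\dots,k\}$ such that every two vertices $u,v$ are joined by a path whose internal vertices all receive distinct colors. For such a coloring let $R_i=c^{-1}(i)$ and $\Pi=(R_1,\dots,R_k)$; the rainbow code of $v$ is $rc_\Pi(v)=(d(v,R_1),\dots,d(v,R_k))$ where $d(v,R_i)=\min_{x\in R_i}d(v,x)$. A rainbow vertex $k$-coloring is a locating rainbow $k$-coloring if distinct vertices have distinct rainbow codes. The locating rainbow connection number $rvcl(G)$ is the least $k$ for which $G$ has a locating rainbow $k$-coloring. *)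

theory Defs
  imports Main
begin

definition simple_graph :: "'a set \<Rightarrow> ('a \<Rightarrow> 'a \<Rightarrow> bool) \<Rightarrow> bool" where
  "simple_graph V E \<longleftrightarrow> finite V \<and> V \<noteq> {} \<and>
     (\<forall>x y. E x y \<longrightarrow> x \<in> V \<and> y \<in> V) \<and>
     (\<forall>x y. E x y \<longrightarrow> E y x) \<and> (\<forall>x. \<not> E x x)"

definition walk :: "'a set \<Rightarrow> ('a \<Rightarrow> 'a \<Rightarrow> bool) \<Rightarrow> 'a list \<Rightarrow> bool" where
  "walk V E p \<longleftrightarrow> p \<noteq> [] \<and> set p \<subseteq> V \<and>
     (\<forall>i. Suc i < length p \<longrightarrow> E (p ! i) (p ! Suc i))"

definition gpath :: "'a set \<Rightarrow> ('a \<Rightarrow> 'a \<Rightarrow> bool) \<Rightarrow> 'a list \<Rightarrow> bool" where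
  "gpath V E p \<longleftrightarrow> walk V E p \<and> distinct p"

definition connected_graph :: "'a set \<Rightarrow> ('a \<Rightarrow> 'a \<Rightarrow> bool) \<Rightarrow> bool" where
  "connected_graph V E \<longleftrightarrow>
     (\<forall>u\<in>V. \<forall>v\<in>V. \<exists>p. gpath V E p \<and> hd p = u \<and> last p = v)"

definition gdist :: "'a set \<Rightarrow> ('a \<Rightarrow> 'a \<Rightarrow> bool) \<Rightarrow> 'a \<Rightarrow> 'a \<Rightarrow> nat" where
  "gdist V E u v = (LEAST n. \<exists>p. walk V E p \<and> hd p = u \<and> last p = v \<and> length p = Suc n)"

definition gdist_set :: "'a set \<Rightarrow> ('a \<Rightarrow> 'a \<Rightarrow> bool) \<Rightarrow> 'a \<Rightarrow> 'a set \<Rightarrow> nat" where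
  "gdist_set V E v R = Min ((\<lambda>x. gdist V E v x) ` R)"

text \<open>Rainbow vertex k-coloring: c maps V onto {1..k} (the colour classes
  R_1..R_k form a partition of V), and any two vertices are joined by a path
  whose internal vertices receive pairwise distinct colours.\<close>
definition rainbow_vertex_coloring ::
  "'a set \<Rightarrow> ('a \<Rightarrow> 'a \<Rightarrow> bool) \<Rightarrow> ('a \<Rightarrow> nat) \<Rightarrow> nat \<Rightarrow> bool" where
  "rainbow_vertex_coloring V E c k \<longleftrightarrow> c ` V = {1..k} \<and>
     (\<forall>u\<in>V. \<forall>v\<in>V. \<exists>p. gpath V E p \<and> hd p = u \<and> last p = v \<and>
        inj_on c (set (butlast (tl p))))"

definition color_class :: "'a set \<Rightarrow> ('a \<Rightarrow> nat) \<Rightarrow> nat \<Rightarrow> 'a set" where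
  "color_class V c i = {x \<in> V. c x = i}"

definition rainbow_code ::
  "'a set \<Rightarrow> ('a \<Rightarrow> 'a \<Rightarrow> bool) \<Rightarrow> ('a \<Rightarrow> nat) \<Rightarrow> nat \<Rightarrow> 'a \<Rightarrow> nat list" where
  "rainbow_code V E c k v = map (\<lambda>i. gdist_set V E v (color_class V c i)) [1..<Suc k]"

definition locating_rainbow_coloring ::
  "'a set \<Rightarrow> ('a \<Rightarrow> 'a \<Rightarrow> bool) \<Rightarrow> ('a \<Rightarrow> nat) \<Rightarrow> nat \<Rightarrow> bool" where
  "locating_rainbow_coloring V E c k \<longleftrightarrow>
     rainbow_vertex_coloring V E c k \<and> inj_on (rainbow_code V E c k) V"

definition rvcl :: "'a set \<Rightarrow> ('a \<Rightarrow> 'a \<Rightarrow> bool) \<Rightarrow> nat" where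
  "rvcl V E = (LEAST k. \<exists>c. locating_rainbow_coloring V E c k)"

end

theory Submission
  imports Defs
begin

lemma gdist_self:
  assumes "u \<in> V" shows "gdist V E u u = 0"
proof -
  have "walk V E [u]" using assms by (simp add: walk_def)
  then show ?thesis unfolding gdist_def by (intro Least_eq_0) (rule exI[of _ "[u]"], simp)
qed

lemma gdist_pos:
  assumes "connected_graph V E" "u \<in> V" "v \<in> V" "u \<noteq> v"
  shows "gdist V E u v \<noteq> 0"
proof
  assume h: "gdist V E u v = 0"
  obtain p where p: "gpath V E p" "hd p = u" "last p = v"
    using assms unfolding connected_graph_def by blast
  have "walk V E p" using p by (simp add: gpath_def)
  then have ex: "\<exists>n. \<exists>p. walk V E p \<and> hd p = u \<and> last p = v \<and> length p = Suc n"
    using p by (intro exI[of _ "length p - 1"] exI[of _ p]) (auto simp: walk_def)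
  from LeastI_ex[OF ex] h obtain q where q: "walk V E q" "hd q = u" "last q = v" "length q = Suc 0"
    unfolding gdist_def by auto
  then obtain x where "q = [x]" by (metis length_0_conv length_Suc_conv)
  with q assms show False by simp
qed

lemma gdist_edge:
  assumes "simple_graph V E" "E u v" shows "gdist V E u v \<le> 1"
proof -
  have "walk V E [u, v]" using assms unfolding walk_def simple_graph_def
    by (auto simp: less_Suc_eq)
  then show ?thesis unfolding gdist_def
    by (intro Least_le[where k=1, simplified]) (rule exI[of _ "[u,v]"], simp)
qed

lemma exists_loc:
  assumes "simple_graph V E" "connected_graph V E"
  shows "\<exists>k c. locating_rainbow_coloring V E c k"
proof -
  have fin: "finite V" using assms by (simp add: simple_graph_def)
  obtain h where h: "bij_betw h V {0..<card V}" using ex_bij_betw_finite_nat[OF fin] by blast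
  define c where "c x = Suc (h x)" for x
  have injc: "inj_on c V" using h by (auto simp: bij_betw_def inj_on_def c_def)
  have img: "c ` V = {1..card V}"
  proof -
    have "c ` V = Suc ` (h ` V)" by (auto simp: c_def)
    also have "\<dots> = Suc ` {0..<card V}" using h by (simp add: bij_betw_def)
    also have "\<dots> = {1..card V}" by (auto simp: image_iff)
    finally show ?thesis .
  qed
  have rb: "rainbow_vertex_coloring V E c (card V)"
    unfolding rainbow_vertex_coloring_def
  proof (intro conjI img ballI)
    fix u v assume "u \<in> V" "v \<in> V"
    then obtain p where p: "gpath V E p" "hd p = u" "last p = v"
      using assms unfolding connected_graph_def by blast
    have "set (butlast (tl p)) \<subseteq> V" using p(1) unfolding gpath_def walk_def
      by (meson in_set_butlastD list.set_sel(2) subset_iff tl_Nil)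
    then show "\<exists>p. gpath V E p \<and> hd p = u \<and> last p = v \<and> inj_on c (set (butlast (tl p)))"
      using p injc inj_on_subset by blast
  qed
  have cls: "color_class V c (c v) = {v}" if "v \<in> V" for v
    using injc that by (auto simp: color_class_def inj_on_def)
  have "inj_on (rainbow_code V E c (card V)) V"
  proof (rule inj_onI, rule ccontr)
    fix u v assume uv: "u \<in> V" "v \<in> V" "rainbow_code V E c (card V) u = rainbow_code V E c (card V) v" "u \<noteq> v"
    have "c v \<in> set [1..<Suc (card V)]" using img uv(2) by (metis atLeastLessThanSuc_atLeastAtMost image_eqI set_upt)
    then have "gdist_set V E u (color_class V c (c v)) = gdist_set V E v (color_class V c (c v))"
      using uv(3) unfolding rainbow_code_def map_eq_conv by blast
    then have "gdist V E u v = gdist V E v v" using cls[OF uv(2)] by (simp add: gdist_set_def)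
    then show False using gdist_self[OF uv(2)] gdist_pos[OF assms(2) uv(1,2,4)] by simp
  qed
  then show ?thesis using rb unfolding locating_rainbow_coloring_def by blast
qed

lemma Min_zero_lem:
  assumes "finite S" "x \<in> S" "f x = (0::nat)" shows "Min (f ` S) = 0"
proof -
  have "Min (f ` S) \<le> f x" using assms by (intro Min_le) auto
  then show ?thesis using assms by simp
qed

theorem lemma3:
  fixes V :: "'a set" and E :: "'a \<Rightarrow> 'a \<Rightarrow> bool" and A B :: "'a set" and t :: nat
  assumes "simple_graph V E" and "connected_graph V E"
    and "A \<subseteq> V" and "B \<subseteq> V" and "A \<inter> B = {}"
    and "card A = t" and "card B = t"
    and "\<forall>w\<in>A. \<forall>z\<in>A. w \<noteq> z \<longrightarrow> E w z"
    and "\<forall>w\<in>B. \<forall>z\<in>B. w \<noteq> z \<longrightarrow> E w z"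
    and "\<forall>w\<in>A. \<forall>z\<in>A. w \<noteq> z \<longrightarrow> (\<forall>y\<in>V - {w, z}. gdist V E w y = gdist V E z y)"
    and "\<forall>w\<in>B. \<forall>z\<in>B. w \<noteq> z \<longrightarrow> (\<forall>y\<in>V - {w, z}. gdist V E w y = gdist V E z y)"
  shows "rvcl V E \<ge> t + 1"
  unfolding rvcl_def
proof (rule LeastI2_ex)
  show "\<exists>k c. locating_rainbow_coloring V E c k" using exists_loc assms(1,2) .
next
  fix k assume "\<exists>c. locating_rainbow_coloring V E c k"
  then obtain c where loc: "locating_rainbow_coloring V E c k" by blast
  have img: "c ` V = {1..k}" and inj: "inj_on (rainbow_code V E c k) V"
    using loc by (auto simp: locating_rainbow_coloring_def rainbow_vertex_coloring_def)
  have fin: "finite V" using assms(1) by (simp add: simple_graph_def)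
  have finc: "finite (color_class V c i)" for i using fin by (simp add: color_class_def)
  have twin: "rainbow_code V E c k w = rainbow_code V E c k z"
    if "w \<in> V" "z \<in> V" "c w = c z" "\<forall>y\<in>V - {w, z}. gdist V E w y = gdist V E z y" for w z
    unfolding rainbow_code_def
  proof (rule map_cong[OF refl])
    fix i
    show "gdist_set V E w (color_class V c i) = gdist_set V E z (color_class V c i)"
    proof (cases "i = c w")
      case True
      have "w \<in> color_class V c i" "z \<in> color_class V c i" using True that by (auto simp: color_class_def)
      then have "gdist_set V E w (color_class V c i) = 0" "gdist_set V E z (color_class V c i) = 0"
        unfolding gdist_set_def using gdist_self[OF that(1)] gdist_self[OF that(2)] finc
        by (intro Min_zero_lem; blast)+
      then show ?thesis by simp
    next
      case False
      have "(\<lambda>x. gdist V E w x) ` color_class V c i = (\<lambda>x. gdist V E z x) ` color_class V c i"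
        using False that by (intro image_cong refl) (auto simp: color_class_def)
      then show ?thesis by (simp add: gdist_set_def)
    qed
  qed
  show "t + 1 \<le> k"
  proof (rule ccontr)
    assume "\<not> t + 1 \<le> k"
    then have kt: "k \<le> t" by simp
    have injA: "inj_on c A"
    proof (rule inj_onI, rule ccontr)
      fix w z assume "w \<in> A" "z \<in> A" "c w = c z" "w \<noteq> z"
      moreover have "w \<in> V" "z \<in> V" using \<open>w \<in> A\<close> \<open>z \<in> A\<close> assms(3) by auto
      moreover have "\<forall>y\<in>V - {w, z}. gdist V E w y = gdist V E z y"
        using assms(10) \<open>w \<in> A\<close> \<open>z \<in> A\<close> \<open>w \<noteq> z\<close> by blast
      ultimately have "rainbow_code V E c k w = rainbow_code V E c k z" using twin by blast
      then show False using inj_onD[OF inj] \<open>w \<in> V\<close> \<open>z \<in> V\<close> \<open>w \<noteq> z\<close> by blast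
    qed
    have injB: "inj_on c B"
    proof (rule inj_onI, rule ccontr)
      fix w z assume "w \<in> B" "z \<in> B" "c w = c z" "w \<noteq> z"
      moreover have "w \<in> V" "z \<in> V" using \<open>w \<in> B\<close> \<open>z \<in> B\<close> assms(4) by auto
      moreover have "\<forall>y\<in>V - {w, z}. gdist V E w y = gdist V E z y"
        using assms(11) \<open>w \<in> B\<close> \<open>z \<in> B\<close> \<open>w \<noteq> z\<close> by blast
      ultimately have "rainbow_code V E c k w = rainbow_code V E c k z" using twin by blast
      then show False using inj_onD[OF inj] \<open>w \<in> V\<close> \<open>z \<in> V\<close> \<open>w \<noteq> z\<close> by blast
    qed
    have finA: "finite A" "finite B" using fin assms(3,4) finite_subset by auto
    have cA: "c ` A = {1..k}"
    proof (rule card_subset_eq)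
      show "c ` A \<subseteq> {1..k}" using img assms(3) by blast
      have "card (c ` A) = t" using card_image[OF injA] assms(6) by simp
      moreover have "card (c ` A) \<le> k" using card_mono[OF _ \<open>c ` A \<subseteq> {1..k}\<close>] by simp
      ultimately show "card (c ` A) = card {1..k}" using kt by simp
    qed simp
    have cB: "c ` B = {1..k}"
    proof (rule card_subset_eq)
      show "c ` B \<subseteq> {1..k}" using img assms(4) by blast
      have "card (c ` B) = t" using card_image[OF injB] assms(7) by simp
      moreover have "card (c ` B) \<le> k" using card_mono[OF _ \<open>c ` B \<subseteq> {1..k}\<close>] by simp
      ultimately show "card (c ` B) = card {1..k}" using kt by simp
    qed simp
    have "k \<noteq> 0" using img assms(1) by (auto simp: simple_graph_def)
    then have "1 \<in> c ` A" "1 \<in> c ` B" using cA cB by auto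
    then obtain a b where ab: "a \<in> A" "b \<in> B" "c a = c b" by (metis imageE)
    have aV: "a \<in> V" and bV: "b \<in> V" using ab assms(3,4) by auto
    have "a \<noteq> b" using ab assms(5) by auto
    have code: "gdist_set V E x (color_class V c j) = (if j = c x then 0 else 1)"
      if X: "X \<subseteq> V" "c ` X = {1..k}" "\<forall>w\<in>X. \<forall>z\<in>X. w \<noteq> z \<longrightarrow> E w z" "x \<in> X" "j \<in> {1..k}" for X x j
    proof -
      have xV: "x \<in> V" using X by auto
      obtain y where y: "y \<in> X" "c y = j" using X(2,5) by (metis imageE)
      have yc: "y \<in> color_class V c j" using y X(1) by (auto simp: color_class_def)
      show ?thesis
      proof (cases "j = c x")
        case True
        have "x \<in> color_class V c j" using True xV by (simp add: color_class_def)
        then show ?thesis unfolding gdist_set_def using True gdist_self[OF xV] finc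
          by (auto intro!: Min_zero_lem)
      next
        case False
        have "x \<noteq> y" using False y by auto
        then have e: "E x y" using X y by blast
        have ge: "\<forall>v\<in>color_class V c j. gdist V E x v \<ge> 1"
        proof
          fix v assume "v \<in> color_class V c j"
          then have "v \<in> V" "v \<noteq> x" using False by (auto simp: color_class_def)
          then show "gdist V E x v \<ge> 1" using gdist_pos[OF assms(2) xV] by fastforce
        qed
        have "gdist V E x y = 1" using gdist_edge[OF assms(1) e] ge yc by fastforce
        then have "Min ((\<lambda>v. gdist V E x v) ` color_class V c j) = 1"
          using ge yc finc
          by (intro Min_eqI) (auto intro: image_eqI[where x=y])
        then show ?thesis using False by (simp add: gdist_set_def)
      qed
    qed
    have "rainbow_code V E c k a = rainbow_code V E c k b"
      unfolding rainbow_code_def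
    proof (rule map_cong[OF refl])
      fix j assume "j \<in> set [1..<Suc k]"
      then have j: "j \<in> {1..k}" by auto
      show "gdist_set V E a (color_class V c j) = gdist_set V E b (color_class V c j)"
        using code[OF assms(3) cA assms(8) ab(1) j] code[OF assms(4) cB assms(9) ab(2) j] ab(3)
        by simp
    qed
    then show False using inj_onD[OF inj] aV bV \<open>a \<noteq> b\<close> by blast
  qed
qed

end
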